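(* For $n\ge1$ the coefficients satisfy the hierarchy $$l_{n1}=nF'',\qquad l_{n2}=\sum_{j=1}^{n-1}j\,\frac{d^2}{dt^2}\log l_{n-j,1},\qquad l_{np}=\sum_{j=1}^{n-1}j\,\frac{d^2}{dt^2}m_{n-j,p-2}\quad(p\ge3).$$ Consequently $$l_{n2}=\tfrac12 n(n-1)\,\frac{F^{(2)}F^{(4)}-(F^{(3)})^2}{(F^{(2)})^2},\qquad l_{n3}=\tfrac1{12}n(n-1)(n-2)\,\frac{d^2}{dt^2}\Big(\frac{F^{(2)}F^{(4)}-(F^{(3)})^2}{(F^{(2)})^3}\Big).$$
   Context: Let $F$ be $C^\infty$ on an open interval $J$ with $F''>0$, and let $L_n(t,N)$ be defined by $L_0=\exp(NF(t))$ and, for $n\ge1$, $$L_n(t,N)=\frac1N\sum_{j=1}^n\frac jN\,\partial_t^2\log L_{n-j}(t,N).$$ For $n\ge1$, expand $L_n(t,N)=\sum_{p\ge1}l_{np}(t)N^{-p}$ in powers of $1/N$. Define $m_{np}$ by $$\sum_{p\ge1}m_{np}N^{-p}=\log\Big(1+\sum_{p\ge1}(l_{n,p+1}/l_{n1})N^{-p}\Big).$$ *)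

theory Defs
  imports "HOL-Analysis.Analysis" "HOL-Computational_Algebra.Formal_Power_Series"
begin

text \<open>For n >= 1, L_n(t,N) is represented by its coefficient
  family c with L_n = sum_{p>=1} c p t * x^p, x = 1/N (c 0 is unused).
  Writing L_n = x * G with G = sum_k c (k+1) t x^k, the formal second
  t-derivative of log L_n is (log L_n)'' = (G G'' - G'^2)/G^2 (the -log N part
  is killed by the t-derivatives); t-derivatives act coefficientwise.
  dlog_ser c t is this power series in x, evaluated at t.\<close>

definition dlog_ser :: "(nat \<Rightarrow> real \<Rightarrow> real) \<Rightarrow> real \<Rightarrow> real fps" where
  "dlog_ser c t =
     (let G  = Abs_fps (\<lambda>k. c (Suc k) t);
          G1 = Abs_fps (\<lambda>k. deriv (c (Suc k)) t);
          G2 = Abs_fps (\<lambda>k. deriv (deriv (c (Suc k))) t)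
      in (G * G2 - G1\<^sup>2) / G\<^sup>2)"

text \<open>lcoef F n p t = l_{np}(t): coefficient of N^(-p) in L_n(t,N), obtained from
  L_n = (1/N) sum_{j=1}^n (j/N) d_t^2 log L_{n-j}, where log L_0 = N F(t) exactly
  (so the j = n term contributes n F''(t)/N), and for n-j >= 1 the term
  d_t^2 log L_{n-j} is the formal series dlog_ser.\<close>

function lcoef :: "(real \<Rightarrow> real) \<Rightarrow> nat \<Rightarrow> nat \<Rightarrow> real \<Rightarrow> real" where
  "lcoef F n p t =
     (if n = 0 \<or> p = 0 then 0
      else (if p = 1 then real n * deriv (deriv F) t else 0)
         + (if 2 \<le> p then (\<Sum>j\<in>{1..<n}. real j * fps_nth (dlog_ser (lcoef F (n - j)) t) (p - 2))
            else 0))"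
  by pat_completeness auto
termination
  by (relation "Wellfounded.measure (\<lambda>(F, n, p, t). n)") auto

text \<open>m_{np}: sum_p m_{np} N^(-p) = log (1 + sum_p (l_{n,p+1}/l_{n1}) N^(-p)),
  the formal logarithm computed as ln(1+X) composed with the series.\<close>

definition mcoef :: "(real \<Rightarrow> real) \<Rightarrow> nat \<Rightarrow> nat \<Rightarrow> real \<Rightarrow> real" where
  "mcoef F n p t =
     fps_nth (fps_ln 1 oo Abs_fps (\<lambda>k. if k = 0 then 0 else lcoef F n (Suc k) t / lcoef F n 1 t)) p"

end

theory Submission imports Defs begin

unbundle no vec_syntax
notation fps_nth (infixl \<open>$\<close> 75)

lemma deriv_cong_J:
  assumes "open J" "x \<in> J" "\<And>u. u \<in> J \<Longrightarrow> f u = g u"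
  shows "deriv f x = deriv g x"
proof (rule deriv_cong_ev[OF _ refl])
  have "eventually (\<lambda>y. y \<in> J) (nhds x)" using assms(1,2) by (rule eventually_nhds_in_open)
  thus "eventually (\<lambda>u. f u = g u) (nhds x)" by eventually_elim (use assms(3) in auto)
qed

lemma fdiff_cong_J:
  assumes "f field_differentiable at x" "open J" "x \<in> J" "\<And>u. u \<in> J \<Longrightarrow> f u = g u"
  shows "g field_differentiable at x"
  using assms has_field_derivative_transform_within_open unfolding field_differentiable_def by metis

fun Cn :: "real set \<Rightarrow> nat \<Rightarrow> (real \<Rightarrow> real) \<Rightarrow> bool" where
  "Cn J 0 f = (\<forall>t\<in>J. f field_differentiable at t)"
| "Cn J (Suc k) f = ((\<forall>t\<in>J. f field_differentiable at t) \<and> Cn J k (deriv f))"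

lemma Cn_diff: "Cn J k f \<Longrightarrow> t \<in> J \<Longrightarrow> f field_differentiable at t"
  by (cases k) auto

lemma Cn_mono: "Cn J (Suc k) f \<Longrightarrow> Cn J k f"
  by (induction k arbitrary: f) auto

lemma Cn_cong:
  assumes "open J" shows "Cn J k f \<Longrightarrow> (\<And>u. u \<in> J \<Longrightarrow> f u = g u) \<Longrightarrow> Cn J k g"
proof (induction k arbitrary: f g)
  case 0
  have "g field_differentiable at t" if "t \<in> J" for t
    by (rule fdiff_cong_J[OF _ assms that, of f]) (use 0 that in auto)
  then show ?case by simp
next
  case (Suc k)
  have "g field_differentiable at t" if "t \<in> J" for t
    by (rule fdiff_cong_J[OF _ assms that, of f]) (use Suc.prems that in auto)
  then have "\<forall>t\<in>J. g field_differentiable at t" by blast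
  moreover have "Cn J k (deriv g)"
  proof (rule Suc.IH[of "deriv f"])
    show "Cn J k (deriv f)" using Suc.prems(1) by simp
    fix u assume "u \<in> J" show "deriv f u = deriv g u"
      by (rule deriv_cong_J[OF assms \<open>u \<in> J\<close>]) (rule Suc.prems(2))
  qed
  ultimately show ?case by simp
qed

lemma Cn_const: "Cn J k (\<lambda>x. c)"
  by (induction k arbitrary: c) auto

lemma Cn_add:
  assumes "open J" shows "Cn J k f \<Longrightarrow> Cn J k g \<Longrightarrow> Cn J k (\<lambda>x. f x + g x)"
proof (induction k arbitrary: f g)
  case 0 then show ?case by (auto intro: field_differentiable_add)
next
  case (Suc k)
  have "Cn J k (\<lambda>x. deriv f x + deriv g x)" using Suc by auto
  then have "Cn J k (deriv (\<lambda>x. f x + g x))"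
    by (rule Cn_cong[OF assms]) (use Suc.prems in auto)
  then show ?case using Suc.prems by (auto intro: field_differentiable_add)
qed

lemma Cn_mult:
  assumes "open J" shows "Cn J k f \<Longrightarrow> Cn J k g \<Longrightarrow> Cn J k (\<lambda>x. f x * g x)"
proof (induction k arbitrary: f g)
  case 0 then show ?case by (auto intro: field_differentiable_mult)
next
  case (Suc k)
  have "Cn J k (\<lambda>x. f x * deriv g x + deriv f x * g x)"
    using Suc Cn_mono Cn_add[OF assms] by auto
  then have "Cn J k (deriv (\<lambda>x. f x * g x))"
    by (rule Cn_cong[OF assms]) (use Suc.prems in auto)
  then show ?case using Suc.prems by (auto intro: field_differentiable_mult)
qed

lemma Cn_inverse:
  assumes "open J" shows "Cn J k f \<Longrightarrow> (\<And>x. x \<in> J \<Longrightarrow> f x \<noteq> 0) \<Longrightarrow> Cn J k (\<lambda>x. inverse (f x))"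
proof (induction k arbitrary: f)
  case 0 then show ?case by (auto intro: field_differentiable_inverse)
next
  case (Suc k)
  have i: "Cn J k (\<lambda>x. inverse (f x))" using Suc Cn_mono by blast
  have a: "Cn J k (\<lambda>x. inverse (f x) * inverse (f x))" by (rule Cn_mult[OF assms i i])
  have b: "Cn J k (\<lambda>x. deriv f x * (inverse (f x) * inverse (f x)))"
    by (rule Cn_mult[OF assms _ a]) (use Suc.prems in simp)
  have "Cn J k (\<lambda>x. (-1) * (deriv f x * (inverse (f x) * inverse (f x))))"
    by (rule Cn_mult[OF assms Cn_const b])
  then have "Cn J k (deriv (\<lambda>x. inverse (f x)))"
    by (rule Cn_cong[OF assms]) (use Suc.prems in \<open>auto simp: power2_eq_square divide_inverse\<close>)
  then show ?case using Suc.prems by (auto intro: field_differentiable_inverse)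
qed

definition smooth :: "real set \<Rightarrow> (real \<Rightarrow> real) \<Rightarrow> bool" where
  "smooth J f = (\<forall>k. Cn J k f)"

lemma smooth_diff: "smooth J f \<Longrightarrow> t \<in> J \<Longrightarrow> f field_differentiable at t"
  unfolding smooth_def using Cn_diff by blast

lemma smooth_deriv: "smooth J f \<Longrightarrow> smooth J (deriv f)"
  unfolding smooth_def by (metis Cn.simps(2))

lemma smooth_const: "smooth J (\<lambda>x. c)" unfolding smooth_def by (simp add: Cn_const)

lemma smooth_cong: "open J \<Longrightarrow> smooth J f \<Longrightarrow> (\<And>u. u \<in> J \<Longrightarrow> f u = g u) \<Longrightarrow> smooth J g"
  unfolding smooth_def using Cn_cong by blast

lemma smooth_add: "open J \<Longrightarrow> smooth J f \<Longrightarrow> smooth J g \<Longrightarrow> smooth J (\<lambda>x. f x + g x)"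
  unfolding smooth_def using Cn_add by blast

lemma smooth_mult: "open J \<Longrightarrow> smooth J f \<Longrightarrow> smooth J g \<Longrightarrow> smooth J (\<lambda>x. f x * g x)"
  unfolding smooth_def using Cn_mult by blast

lemma smooth_inverse: "open J \<Longrightarrow> smooth J f \<Longrightarrow> (\<And>x. x \<in> J \<Longrightarrow> f x \<noteq> 0) \<Longrightarrow> smooth J (\<lambda>x. inverse (f x))"
  unfolding smooth_def using Cn_inverse by blast

lemma smooth_cmult: "open J \<Longrightarrow> smooth J f \<Longrightarrow> smooth J (\<lambda>x. c * f x)"
  using smooth_mult[OF _ smooth_const] by blast

lemma smooth_minus: "open J \<Longrightarrow> smooth J f \<Longrightarrow> smooth J (\<lambda>x. - f x)"
  using smooth_cmult[of J f "-1"] by simp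

lemma smooth_sub: "open J \<Longrightarrow> smooth J f \<Longrightarrow> smooth J g \<Longrightarrow> smooth J (\<lambda>x. f x - g x)"
  using smooth_add[of J f "\<lambda>x. - g x"] smooth_minus by auto

lemma smooth_divide: "open J \<Longrightarrow> smooth J f \<Longrightarrow> smooth J g \<Longrightarrow> (\<And>x. x \<in> J \<Longrightarrow> g x \<noteq> 0) \<Longrightarrow> smooth J (\<lambda>x. f x / g x)"
  using smooth_mult[of J f "\<lambda>x. inverse (g x)"] smooth_inverse by (auto simp: divide_inverse)

lemma smooth_sum: "open J \<Longrightarrow> (\<And>i. i \<in> S \<Longrightarrow> smooth J (f i)) \<Longrightarrow> smooth J (\<lambda>x. \<Sum>i\<in>S. f i x)"
proof (induction S rule: infinite_finite_induct)
  case (infinite A) then show ?case by (simp add: smooth_const)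
next
  case empty then show ?case by (simp add: smooth_const)
next
  case (insert x F) then show ?case using smooth_add[of J "f x"] by auto
qed

lemma smooth_higher:
  assumes "\<forall>k. \<forall>t\<in>J. ((deriv ^^ k) F) differentiable (at t)"
  shows "smooth J F"
proof -
  have "\<forall>F. (\<forall>k. \<forall>t\<in>J. ((deriv ^^ k) F) differentiable (at t)) \<longrightarrow> Cn J k F" for k
  proof (induction k)
    case 0 then show ?case
      by (metis Cn.simps(1) DERIV_deriv_iff_field_differentiable DERIV_deriv_iff_real_differentiable funpow_0)
  next
    case (Suc k)
    show ?case
    proof (intro allI impI)
      fix F assume h: "\<forall>k. \<forall>t\<in>J. ((deriv ^^ k) F) differentiable (at t)"
      have "\<forall>k. \<forall>t\<in>J. ((deriv ^^ k) (deriv F)) differentiable (at t)"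
        using h by (metis funpow_Suc_right comp_apply)
      then have "Cn J k (deriv F)" using Suc by blast
      moreover have "\<forall>t\<in>J. F field_differentiable at t"
      proof
        fix t assume "t \<in> J"
        with h have "((deriv ^^ 0) F) differentiable (at t)" by blast
        then show "F field_differentiable at t"
          by (metis DERIV_deriv_iff_field_differentiable DERIV_deriv_iff_real_differentiable funpow_0)
      qed
      ultimately show "Cn J (Suc k) F" by simp
    qed
  qed
  then show ?thesis using assms unfolding smooth_def by blast
qed


lemma deriv_sum_fd:
  "finite S \<Longrightarrow> (\<And>i. i \<in> S \<Longrightarrow> f i field_differentiable at s) \<Longrightarrow>
   deriv (\<lambda>u. \<Sum>i\<in>S. f i u) s = (\<Sum>i\<in>S. deriv (f i) s)"
proof (induction S rule: finite_induct)
  case empty then show ?case by simp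
next
  case (insert x F)
  have "deriv (\<lambda>u. \<Sum>i\<in>insert x F. f i u) s = deriv (\<lambda>u. f x u + (\<Sum>i\<in>F. f i u)) s"
    using insert by simp
  also have "\<dots> = deriv (f x) s + deriv (\<lambda>u. \<Sum>i\<in>F. f i u) s"
    using insert by (intro deriv_add) (auto intro!: field_differentiable_sum)
  finally show ?case using insert by simp
qed

definition dS :: "(real \<Rightarrow> real fps) \<Rightarrow> real \<Rightarrow> real fps" where
  "dS A s = Abs_fps (\<lambda>k. deriv (\<lambda>u. A u $ k) s)"

definition sm :: "real set \<Rightarrow> (real \<Rightarrow> real fps) \<Rightarrow> bool" where
  "sm J A = (\<forall>k. smooth J (\<lambda>u. A u $ k))"

lemma dS_nth: "dS A s $ k = deriv (\<lambda>u. A u $ k) s"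
  by (simp add: dS_def)

lemma smD: "sm J A \<Longrightarrow> smooth J (\<lambda>u. A u $ k)"
  by (simp add: sm_def)

lemma smD': "sm J A \<Longrightarrow> s \<in> J \<Longrightarrow> (\<lambda>u. A u $ k) field_differentiable at s"
  by (rule smooth_diff[OF smD])

lemma sm_cong:
  assumes "open J" "sm J A" "\<And>u. u \<in> J \<Longrightarrow> A u = B u" shows "sm J B"
  unfolding sm_def
proof
  fix k show "smooth J (\<lambda>u. B u $ k)"
    by (rule smooth_cong[OF assms(1) smD[OF assms(2)]]) (simp add: assms(3))
qed

lemma sm_add: "open J \<Longrightarrow> sm J A \<Longrightarrow> sm J B \<Longrightarrow> sm J (\<lambda>u. A u + B u)"
  unfolding sm_def by (simp add: smooth_add)

lemma sm_sub: "open J \<Longrightarrow> sm J A \<Longrightarrow> sm J B \<Longrightarrow> sm J (\<lambda>u. A u - B u)"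
  unfolding sm_def by (simp add: smooth_sub)

lemma sm_mult: "open J \<Longrightarrow> sm J A \<Longrightarrow> sm J B \<Longrightarrow> sm J (\<lambda>u. A u * B u)"
  unfolding sm_def fps_mult_nth by (auto intro!: smooth_sum smooth_mult)

lemma sm_Abs: "(\<And>k. smooth J (f k)) \<Longrightarrow> sm J (\<lambda>u. Abs_fps (\<lambda>k. f k u))"
  unfolding sm_def by simp

lemma sm_constfps: "smooth J f \<Longrightarrow> sm J (\<lambda>u. fps_const (f u))"
  unfolding sm_def
proof
  fix k assume "smooth J f" then show "smooth J (\<lambda>u. fps_const (f u) $ k)"
    by (cases "k = 0") (simp_all add: smooth_const)
qed

lemma sm_constant: "sm J (\<lambda>u. C)"
  unfolding sm_def by (simp add: smooth_const)

lemma sm_power: "open J \<Longrightarrow> sm J A \<Longrightarrow> sm J (\<lambda>u. A u ^ n)"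
  by (induction n) (auto intro: sm_mult sm_constant)

lemma sm_dS: "sm J A \<Longrightarrow> sm J (dS A)"
  unfolding sm_def dS_nth using smooth_deriv by (metis ext)

lemma sm_fps_deriv: "open J \<Longrightarrow> sm J A \<Longrightarrow> sm J (\<lambda>u. fps_deriv (A u))"
  unfolding sm_def by (simp add: smooth_cmult)

lemma sm_compose: "open J \<Longrightarrow> sm J A \<Longrightarrow> sm J (\<lambda>u. C oo A u)"
  unfolding sm_def fps_compose_nth
  by (auto intro!: smooth_sum smooth_cmult sm_power[unfolded sm_def, rule_format])

lemma sm_inverse:
  assumes J: "open J" and A: "sm J A" and nz: "\<And>u. u \<in> J \<Longrightarrow> A u $ 0 \<noteq> 0"
  shows "sm J (\<lambda>u. inverse (A u))"
proof -
  have i0: "smooth J (\<lambda>u. inverse (A u $ 0))"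
    using smooth_inverse[OF J smD[OF A] nz] by simp
  have "smooth J (\<lambda>u. inverse (A u) $ n)" for n
  proof (induction n rule: less_induct)
    case (less n)
    show ?case
    proof (cases n)
      case 0 then show ?thesis using i0 by (simp add: fps_inverse_def)
    next
      case (Suc m)
      have "(\<lambda>u. inverse (A u) $ n) =
            (\<lambda>u. - inverse (A u $ 0) * (\<Sum>i\<in>{1..n}. A u $ i * inverse (A u) $ (n - i)))"
        using Suc by (simp add: fps_inverse_def)
      moreover have "smooth J (\<lambda>u. - inverse (A u $ 0) * (\<Sum>i\<in>{1..n}. A u $ i * inverse (A u) $ (n - i)))"
        using J i0 A less Suc
        by (intro smooth_mult smooth_minus smooth_sum) (auto intro: smD)
      ultimately show ?thesis by simp
    qed
  qed
  then show ?thesis by (simp add: sm_def)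
qed

lemma dS_cong:
  assumes "open J" "s \<in> J" "\<And>u. u \<in> J \<Longrightarrow> A u = B u" shows "dS A s = dS B s"
proof (intro fps_ext)
  fix k
  have "deriv (\<lambda>u. A u $ k) s = deriv (\<lambda>u. B u $ k) s"
    by (rule deriv_cong_J[OF assms(1,2)]) (simp add: assms(3))
  then show "dS A s $ k = dS B s $ k" by (simp add: dS_nth)
qed

lemma dS_add: "sm J A \<Longrightarrow> sm J B \<Longrightarrow> s \<in> J \<Longrightarrow> dS (\<lambda>u. A u + B u) s = dS A s + dS B s"
  by (intro fps_ext) (simp add: dS_nth smD')

lemma dS_sub: "sm J A \<Longrightarrow> sm J B \<Longrightarrow> s \<in> J \<Longrightarrow> dS (\<lambda>u. A u - B u) s = dS A s - dS B s"
  by (intro fps_ext) (simp add: dS_nth smD')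

lemma dS_mult: "sm J A \<Longrightarrow> sm J B \<Longrightarrow> s \<in> J \<Longrightarrow> dS (\<lambda>u. A u * B u) s = dS A s * B s + A s * dS B s"
proof (intro fps_ext)
  fix k assume h: "sm J A" "sm J B" "s \<in> J"
  have "dS (\<lambda>u. A u * B u) s $ k = deriv (\<lambda>u. \<Sum>i=0..k. A u $ i * B u $ (k - i)) s"
    by (simp add: dS_nth fps_mult_nth)
  also have "\<dots> = (\<Sum>i=0..k. deriv (\<lambda>u. A u $ i * B u $ (k - i)) s)"
    using h by (intro deriv_sum_fd) (auto intro!: field_differentiable_mult smD')
  also have "\<dots> = (\<Sum>i=0..k. dS A s $ i * B s $ (k - i) + A s $ i * dS B s $ (k - i))"
    using h by (intro sum.cong refl) (simp add: dS_nth smD' algebra_simps)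
  also have "\<dots> = (dS A s * B s + A s * dS B s) $ k"
    by (simp add: fps_mult_nth sum.distrib)
  finally show "dS (\<lambda>u. A u * B u) s $ k = (dS A s * B s + A s * dS B s) $ k" .
qed

lemma dS_constfps: "dS (\<lambda>u. fps_const (f u)) s = fps_const (deriv f s)"
  by (intro fps_ext) (auto simp: dS_nth)

lemma dS_constant: "dS (\<lambda>u. C) s = 0"
  by (intro fps_ext) (auto simp: dS_nth)

lemma dS_fps_deriv: "sm J A \<Longrightarrow> s \<in> J \<Longrightarrow> dS (\<lambda>u. fps_deriv (A u)) s = fps_deriv (dS A s)"
  by (intro fps_ext) (simp add: dS_nth smD' deriv_cmult)

lemma dS_inverse:
  assumes J: "open J" and A: "sm J A" and nz: "\<And>u. u \<in> J \<Longrightarrow> A u $ 0 \<noteq> 0" and s: "s \<in> J"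
  shows "dS (\<lambda>u. inverse (A u)) s = - dS A s * (inverse (A s))\<^sup>2"
proof -
  have I: "sm J (\<lambda>u. inverse (A u))" using sm_inverse[OF J A nz] .
  have "dS (\<lambda>u. A u * inverse (A u)) s = dS (\<lambda>u. 1) s"
    using J s nz by (intro dS_cong) (auto intro: inverse_mult_eq_1')
  then have e: "dS A s * inverse (A s) + A s * dS (\<lambda>u. inverse (A u)) s = 0"
    using dS_mult[OF A I s] dS_constant by simp
  have iA: "inverse (A s) * A s = 1" using nz[OF s] by (rule inverse_mult_eq_1)
  have "dS (\<lambda>u. inverse (A u)) s = (inverse (A s) * A s) * dS (\<lambda>u. inverse (A u)) s"
    using iA by simp
  also have "\<dots> = inverse (A s) * (A s * dS (\<lambda>u. inverse (A u)) s)" by (simp add: algebra_simps)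
  also have "A s * dS (\<lambda>u. inverse (A u)) s = - (dS A s * inverse (A s))"
    using e by (simp add: eq_neg_iff_add_eq_0 add.commute)
  finally show ?thesis by (simp add: power2_eq_square algebra_simps)
qed


lemma ln_compose_deriv:
  fixes H :: "real fps" assumes "H $ 0 = 0"
  shows "fps_deriv (fps_ln 1 oo H) = inverse (1 + H) * fps_deriv H"
proof -
  have "fps_deriv (fps_ln 1 oo H) = (fps_deriv (fps_ln 1) oo H) * fps_deriv H"
    using assms by (rule fps_compose_deriv)
  also have "fps_deriv (fps_ln (1::real)) = inverse (1 + fps_X)"
    by (simp add: fps_ln_deriv)
  also have "inverse (1 + fps_X) oo H = inverse ((1 + fps_X) oo H)"
    using assms by (intro fps_inverse_compose) auto
  also have "(1 + fps_X) oo H = 1 + H"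
    using assms by (simp add: fps_compose_add_distrib)
  finally show ?thesis .
qed

lemma key_L:
  fixes H :: "real \<Rightarrow> real fps"
  assumes J: "open J" and smH: "sm J H" and H0: "\<And>u. H u $ 0 = 0" and s: "s \<in> J"
  shows "dS (\<lambda>u. fps_ln 1 oo H u) s = dS H s * inverse (1 + H s)"
proof -
  define L where "L = (\<lambda>u. fps_ln (1::real) oo H u)"
  define K where "K = dS H s * inverse (1 + H s)"
  have smL: "sm J L" unfolding L_def using sm_compose[OF J smH] .
  have sm1H: "sm J (\<lambda>u. 1 + H u)" by (intro sm_add[OF J] sm_constant smH)
  have nz: "\<And>u. u \<in> J \<Longrightarrow> (1 + H u) $ 0 \<noteq> 0" using H0 by simp
  have smI: "sm J (\<lambda>u. inverse (1 + H u))" by (rule sm_inverse[OF J sm1H nz])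
  have smD: "sm J (\<lambda>u. fps_deriv (H u))" by (rule sm_fps_deriv[OF J smH])
  have d1H: "dS (\<lambda>u. 1 + H u) s = dS H s"
    using dS_add[OF sm_constant smH s] by (simp add: dS_constant)
  have "fps_deriv (dS L s) = dS (\<lambda>u. fps_deriv (L u)) s"
    using dS_fps_deriv[OF smL s] by simp
  also have "(\<lambda>u. fps_deriv (L u)) = (\<lambda>u. inverse (1 + H u) * fps_deriv (H u))"
    unfolding L_def using H0 by (simp add: ln_compose_deriv)
  also have "dS \<dots> s = dS (\<lambda>u. inverse (1 + H u)) s * fps_deriv (H s) + inverse (1 + H s) * dS (\<lambda>u. fps_deriv (H u)) s"
    by (rule dS_mult[OF smI smD s])
  also have "\<dots> = - dS H s * (inverse (1 + H s))\<^sup>2 * fps_deriv (H s) + inverse (1 + H s) * fps_deriv (dS H s)"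
    using dS_inverse[OF J sm1H nz s] dS_fps_deriv[OF smH s] d1H by simp
  also have "\<dots> = fps_deriv K"
    unfolding K_def using fps_inverse_deriv[of "1 + H s"] H0[of s]
    by (simp add: algebra_simps)
  finally have e: "fps_deriv (dS L s) = fps_deriv K" .
  have a: "dS L s $ 0 = 0"
    by (simp add: dS_nth L_def fps_ln_nth)
  have b: "K $ 0 = 0"
    by (simp add: K_def dS_nth H0)
  have "dS L s = K" using e a b by (simp add: fps_deriv_eq_iff)
  then show ?thesis unfolding L_def K_def .
qed


lemma alg1:
  fixes a b d i :: "'a::comm_ring_1"
  assumes h: "i * a = 1"
  shows "(a*b - d^2) * i^2 = b*i + d*(-d*i^2)"
proof -
  have "(a*b - d^2)*i^2 = b*i*(i*a) - d^2*i^2" by (simp add: algebra_simps power2_eq_square)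
  also have "\<dots> = b*i - d^2*i^2" using h by simp
  also have "\<dots> = b*i + d*(-d*i^2)" by (simp add: algebra_simps power2_eq_square)
  finally show ?thesis .
qed

lemma key:
  fixes c :: "nat \<Rightarrow> real \<Rightarrow> real"
  assumes J: "open J" and smc: "\<And>k. smooth J (c k)" and c1: "\<And>s. s \<in> J \<Longrightarrow> c 1 s \<noteq> 0"
    and t: "t \<in> J" and q: "q \<ge> 1"
  shows "dlog_ser c t $ q =
    deriv (deriv (\<lambda>s. (fps_ln 1 oo Abs_fps (\<lambda>k. if k = 0 then 0 else c (Suc k) s / c 1 s)) $ q)) t"
proof -
  define G where "G = (\<lambda>u. Abs_fps (\<lambda>k. c (Suc k) u))"
  define H where "H = (\<lambda>u. Abs_fps (\<lambda>k. if k = 0 then 0 else c (Suc k) u / c 1 u))"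
  define L where "L = (\<lambda>u. fps_ln (1::real) oo H u)"
  have smG: "sm J G" unfolding G_def by (rule sm_Abs) (rule smc)
  have smH: "sm J H" unfolding H_def
  proof (rule sm_Abs)
    fix k show "smooth J (\<lambda>u. if k = 0 then 0 else c (Suc k) u / c 1 u)"
      using smooth_divide[OF J smc smc c1, of "Suc k"] by (cases "k = 0") (simp_all add: smooth_const)
  qed
  have H0: "\<And>u. H u $ 0 = 0" by (simp add: H_def)
  have G0: "\<And>u. u \<in> J \<Longrightarrow> G u $ 0 \<noteq> 0" using c1 by (simp add: G_def)
  have smdG: "sm J (dS G)" by (rule sm_dS[OF smG])
  have smiG: "sm J (\<lambda>u. inverse (G u))" by (rule sm_inverse[OF J smG G0])
  have sm1H: "sm J (\<lambda>u. 1 + H u)" by (intro sm_add[OF J] sm_constant smH)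
  have nz: "\<And>u. u \<in> J \<Longrightarrow> (1 + H u) $ 0 \<noteq> 0" using H0 by simp
  have smI: "sm J (\<lambda>u. inverse (1 + H u))" by (rule sm_inverse[OF J sm1H nz])
  define K where "K = (\<lambda>u. dS H u * inverse (1 + H u))"
  have smK: "sm J K" unfolding K_def by (rule sm_mult[OF J sm_dS[OF smH] smI])
  define C where "C = (\<lambda>u. fps_const (deriv (c 1) u / c 1 u))"
  have smC: "sm J C" unfolding C_def
    by (rule sm_constfps, rule smooth_divide[OF J smooth_deriv[OF smc] smc c1])
  have dl: "dlog_ser c t = (G t * dS (dS G) t - (dS G t)\<^sup>2) / (G t)\<^sup>2"
    by (simp add: dlog_ser_def Let_def G_def dS_def)
  have iG: "inverse (G t) * G t = 1" using G0[OF t] by (rule inverse_mult_eq_1)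
  have s1: "dlog_ser c t = dS (\<lambda>s. dS G s * inverse (G s)) t"
  proof -
    have "(G t)\<^sup>2 $ 0 \<noteq> 0" using G0[OF t] by (simp add: power2_eq_square)
    then have "dlog_ser c t = (G t * dS (dS G) t - (dS G t)\<^sup>2) * (inverse (G t))\<^sup>2"
      unfolding dl by (simp add: fps_divide_unit power2_eq_square fps_inverse_mult)
    also have "\<dots> = dS (dS G) t * inverse (G t) + dS G t * (- dS G t * (inverse (G t))\<^sup>2)"
      by (rule alg1[OF iG])
    also have "\<dots> = dS (\<lambda>s. dS G s * inverse (G s)) t"
      using dS_mult[OF smdG smiG t] dS_inverse[OF J smG G0 t] by simp
    finally show ?thesis .
  qed
  have s2: "dS G s * inverse (G s) = C s + K s" if s: "s \<in> J" for s
  proof -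
    have Geq: "\<And>u. u \<in> J \<Longrightarrow> G u = fps_const (c 1 u) * (1 + H u)"
      using c1 by (intro fps_ext) (auto simp: G_def H_def)
    have "dS G s = dS (\<lambda>u. fps_const (c 1 u) * (1 + H u)) s"
      by (rule dS_cong[OF J s Geq])
    also have "\<dots> = fps_const (deriv (c 1) s) * (1 + H s) + fps_const (c 1 s) * dS H s"
      using dS_mult[OF sm_constfps[OF smc] sm1H s] dS_add[OF sm_constant smH s]
      by (simp add: dS_constfps dS_constant)
    finally have dG: "dS G s = \<dots>" .
    have iGs: "inverse (G s) = fps_const (inverse (c 1 s)) * inverse (1 + H s)"
      using Geq[OF s] by (simp add: fps_inverse_mult fps_const_inverse)
    have i1: "(1 + H s) * inverse (1 + H s) = 1" using nz[OF s] by (rule inverse_mult_eq_1')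
    have cc: "fps_const (c 1 s) * fps_const (inverse (c 1 s)) = 1"
      using c1[OF s] by (simp flip: fps_const_mult)
    have "dS G s * inverse (G s) =
        fps_const (deriv (c 1) s) * fps_const (inverse (c 1 s)) * ((1 + H s) * inverse (1 + H s))
        + (fps_const (c 1 s) * fps_const (inverse (c 1 s))) * (dS H s * inverse (1 + H s))"
      unfolding dG iGs by (simp add: algebra_simps)
    also have "\<dots> = C s + K s"
      unfolding i1 cc by (simp add: C_def K_def fps_const_mult divide_inverse)
    finally show ?thesis .
  qed
  have s3: "dS L u = K u" if "u \<in> J" for u
    unfolding L_def K_def by (rule key_L[OF J smH H0 that])
  have "dS (\<lambda>s. dS G s * inverse (G s)) t = dS (\<lambda>s. C s + K s) t"
    by (rule dS_cong[OF J t s2])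
  also have "\<dots> = dS C t + dS K t" by (rule dS_add[OF smC smK t])
  also have "dS K t = dS (dS L) t" by (rule dS_cong[OF J t]) (simp add: s3)
  finally have "dlog_ser c t = dS C t + dS (dS L) t" using s1 by simp
  then have "dlog_ser c t $ q = dS (dS L) t $ q"
    using q by (simp add: C_def dS_constfps)
  also have "\<dots> = deriv (deriv (\<lambda>s. L s $ q)) t"
    by (simp add: dS_nth)
  finally show ?thesis by (simp add: L_def H_def)
qed


lemma sm_dlog:
  fixes c :: "nat \<Rightarrow> real \<Rightarrow> real"
  assumes J: "open J" and smc: "\<And>k. smooth J (c k)" and c1: "\<And>s. s \<in> J \<Longrightarrow> c 1 s \<noteq> 0"
  shows "sm J (dlog_ser c)"
proof -
  define G where "G = (\<lambda>u. Abs_fps (\<lambda>k. c (Suc k) u))"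
  have smG: "sm J G" unfolding G_def by (rule sm_Abs) (rule smc)
  have G0: "\<And>u. u \<in> J \<Longrightarrow> G u $ 0 \<noteq> 0" using c1 by (simp add: G_def)
  have G20: "\<And>u. u \<in> J \<Longrightarrow> (G u ^ 2) $ 0 \<noteq> 0" using G0 by (simp add: power2_eq_square)
  have "sm J (\<lambda>u. (G u * dS (dS G) u - (dS G u)\<^sup>2) * inverse (G u ^ 2))"
    by (intro sm_mult[OF J] sm_sub[OF J] sm_power[OF J] sm_inverse[OF J] smG sm_dS G20)
  then show ?thesis
  proof (rule sm_cong[OF J])
    fix u assume "u \<in> J"
    then show "(G u * dS (dS G) u - (dS G u)\<^sup>2) * inverse (G u ^ 2) = dlog_ser c u"
      using G20 by (simp add: dlog_ser_def Let_def G_def dS_def fps_divide_unit)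
  qed
qed

lemma dlog0:
  fixes c :: "nat \<Rightarrow> real \<Rightarrow> real"
  assumes "c 1 t \<noteq> 0"
  shows "dlog_ser c t $ 0 = (c 1 t * deriv (deriv (c 1)) t - (deriv (c 1) t)\<^sup>2) / (c 1 t)\<^sup>2"
  using assms
  by (simp add: dlog_ser_def Let_def fps_divide_unit power2_eq_square fps_inverse_def divide_inverse)

lemma lc1: "n \<ge> 1 \<Longrightarrow> lcoef F n 1 s = real n * deriv (deriv F) s"
  by (subst lcoef.simps) simp

lemma lcp: "n \<ge> 1 \<Longrightarrow> p \<ge> 2 \<Longrightarrow>
   lcoef F n p s = (\<Sum>j\<in>{1..<n}. real j * dlog_ser (lcoef F (n - j)) s $ (p - 2))"
  by (subst lcoef.simps) simp

lemma lc_smooth: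
  assumes J: "open J" and f2: "smooth J (deriv (deriv F))" and pos: "\<And>s. s \<in> J \<Longrightarrow> deriv (deriv F) s > 0"
  shows "smooth J (lcoef F n p)"
proof (induction n arbitrary: p rule: less_induct)
  case (less n)
  show ?case
  proof (cases "n = 0 \<or> p = 0")
    case True
    then have "lcoef F n p = (\<lambda>s. 0)" by (intro ext, subst lcoef.simps) auto
    then show ?thesis by (simp add: smooth_const)
  next
    case False
    show ?thesis
    proof (cases "p = 1")
      case True
      then have "lcoef F n p = (\<lambda>s. real n * deriv (deriv F) s)" using False by (intro ext lc1) auto
      then show ?thesis using smooth_cmult[OF J f2] by simp
    next
      case p1: False
      have "lcoef F n p = (\<lambda>s. \<Sum>j\<in>{1..<n}. real j * dlog_ser (lcoef F (n - j)) s $ (p - 2))"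
        using False p1 by (intro ext lcp) auto
      moreover have "smooth J (\<lambda>s. \<Sum>j\<in>{1..<n}. real j * dlog_ser (lcoef F (n - j)) s $ (p - 2))"
      proof (rule smooth_sum[OF J], rule smooth_cmult[OF J], rule smD, rule sm_dlog[OF J])
        fix j k assume j: "j \<in> {1..<n}"
        show "smooth J (lcoef F (n - j) k)" using j by (intro less) auto
        fix s assume s: "s \<in> J"
        show "lcoef F (n - j) 1 s \<noteq> 0" using j pos[OF s] lc1[of "n - j" F s] by auto
      qed
      ultimately show ?thesis by simp
    qed
  qed
qed

lemma deriv2_cong:
  assumes J: "open J" and t: "t \<in> J" and e: "\<And>u. u \<in> J \<Longrightarrow> f u = g u"
  shows "deriv (deriv f) t = deriv (deriv g) t"
proof (rule deriv_cong_J[OF J t])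
  fix u assume "u \<in> J" then show "deriv f u = deriv g u" by (rule deriv_cong_J[OF J _ e])
qed

lemma deriv2_cmult:
  assumes J: "open J" and t: "t \<in> J" and g: "smooth J g"
  shows "deriv (deriv (\<lambda>s. a * g s)) t = a * deriv (deriv g) t"
proof -
  have "deriv (deriv (\<lambda>s. a * g s)) t = deriv (\<lambda>u. a * deriv g u) t"
  proof (rule deriv_cong_J[OF J t])
    fix u assume "u \<in> J" then show "deriv (\<lambda>s. a * g s) u = a * deriv g u"
      using smooth_diff[OF g] by (simp add: deriv_cmult)
  qed
  also have "\<dots> = a * deriv (deriv g) t"
    using smooth_diff[OF smooth_deriv[OF g] t] by (simp add: deriv_cmult)
  finally show ?thesis .
qed

lemma sum_j: "(\<Sum>j\<in>{1..<n}. real j) = real n * (real n - 1) / 2"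
  by (induction n) (auto simp: sum.op_ivl_Suc field_simps)

lemma sum_j2: "(\<Sum>j\<in>{1..<n}. real j ^ 2) = (real n - 1) * real n * (2 * real n - 1) / 6"
  by (induction n) (auto simp: sum.op_ivl_Suc field_simps power2_eq_square)

lemma sum_j3: "(\<Sum>j\<in>{1..<n}. real j * (real (n - j) - 1)) = real n * (real n - 1) * (real n - 2) / 6"
proof -
  have "(\<Sum>j\<in>{1..<n}. real j * (real (n - j) - 1)) = (\<Sum>j\<in>{1..<n}. (real n - 1) * real j - real j ^ 2)"
    by (intro sum.cong refl) (auto simp: of_nat_diff algebra_simps power2_eq_square)
  also have "\<dots> = (real n - 1) * (\<Sum>j\<in>{1..<n}. real j) - (\<Sum>j\<in>{1..<n}. real j ^ 2)"
    by (simp add: sum_subtractf sum_distrib_left)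
  also have "\<dots> = real n * (real n - 1) * (real n - 2) / 6"
    unfolding sum_j sum_j2 by (simp add: field_simps)
  finally show ?thesis .
qed


lemma smooth_power: "open J \<Longrightarrow> smooth J f \<Longrightarrow> smooth J (\<lambda>s. f s ^ k)"
  by (induction k) (auto intro: smooth_mult smooth_const)

lemma alg2: "(x::real) * ((a - 1) / 2 * e) = x * (a - 1) * (e / 2)"
  by simp

theorem mainTheorem5:
  fixes F :: "real \<Rightarrow> real" and J :: "real set"
  assumes J_open: "open J" and J_interval: "is_interval J"
    and F_smooth: "\<forall>k. \<forall>t\<in>J. ((deriv ^^ k) F) differentiable (at t)"
    and F2_pos: "\<forall>t\<in>J. (deriv ^^ 2) F t > 0"
  shows "\<forall>n\<ge>1. \<forall>t\<in>J.
      lcoef F n 1 t = real n * (deriv ^^ 2) F t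
    \<and> lcoef F n 2 t = (\<Sum>j\<in>{1..<n}. real j * deriv (deriv (\<lambda>s. ln (lcoef F (n - j) 1 s))) t)
    \<and> (\<forall>p\<ge>3. lcoef F n p t = (\<Sum>j\<in>{1..<n}. real j * deriv (deriv (mcoef F (n - j) (p - 2))) t))
    \<and> lcoef F n 2 t = 1/2 * real n * (real n - 1) *
         (((deriv ^^ 2) F t * (deriv ^^ 4) F t - ((deriv ^^ 3) F t)\<^sup>2) / ((deriv ^^ 2) F t)\<^sup>2)
    \<and> lcoef F n 3 t = 1/12 * real n * (real n - 1) * (real n - 2) *
         deriv (deriv (\<lambda>s. ((deriv ^^ 2) F s * (deriv ^^ 4) F s - ((deriv ^^ 3) F s)\<^sup>2)
                           / ((deriv ^^ 2) F s) ^ 3)) t"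
proof -
  note J = J_open
  define f2 where "f2 = deriv (deriv F)"
  define f3 where "f3 = deriv f2"
  define f4 where "f4 = deriv f3"
  have d2: "(deriv ^^ 2) F = f2" by (simp add: f2_def numeral_2_eq_2)
  have d3: "(deriv ^^ 3) F = f3" by (simp add: f3_def f2_def numeral_3_eq_3)
  have d4: "(deriv ^^ 4) F = f4" by (simp add: f4_def f3_def f2_def eval_nat_numeral)
  have smF: "smooth J F" by (rule smooth_higher[OF F_smooth])
  have sm2: "smooth J f2" unfolding f2_def by (intro smooth_deriv smF)
  have sm3: "smooth J f3" unfolding f3_def by (intro smooth_deriv sm2)
  have sm4: "smooth J f4" unfolding f4_def by (intro smooth_deriv sm3)
  have pos: "\<And>s. s \<in> J \<Longrightarrow> f2 s > 0" using F2_pos d2 by auto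
  have pos': "\<And>s. s \<in> J \<Longrightarrow> deriv (deriv F) s > 0" using pos f2_def by auto
  have lcs: "\<And>m p. smooth J (lcoef F m p)"
    by (rule lc_smooth[OF J]) (use sm2 pos' f2_def in auto)
  have lc1': "\<And>m s. m \<ge> 1 \<Longrightarrow> lcoef F m 1 s = real m * f2 s" by (simp add: lc1 f2_def)
  define Dv where "Dv = (\<lambda>s. (f2 s * f4 s - (f3 s)\<^sup>2) / (f2 s)\<^sup>2)"
  define E where "E = (\<lambda>s. (f2 s * f4 s - (f3 s)\<^sup>2) / (f2 s) ^ 3)"
  have smE: "smooth J E" unfolding E_def
    by (intro smooth_divide[OF J] smooth_sub[OF J] smooth_mult[OF J] smooth_power[OF J] sm2 sm3 sm4)
       (use pos in force)
  have B: "dlog_ser (lcoef F m) s $ 0 = Dv s" if m: "m \<ge> 1" and s: "s \<in> J" for m s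
  proof -
    have c1: "lcoef F m 1 = (\<lambda>s. real m * f2 s)" using lc1' m by auto
    have e1: "deriv (lcoef F m 1) s = real m * f3 s"
      unfolding c1 f3_def using smooth_diff[OF sm2 s] by (simp add: deriv_cmult)
    have e2: "deriv (deriv (lcoef F m 1)) s = real m * f4 s"
      unfolding c1 f4_def f3_def using deriv2_cmult[OF J s sm2] by simp
    have nz: "lcoef F m 1 s \<noteq> 0" using c1 pos[OF s] m by auto
    have "dlog_ser (lcoef F m) s $ 0 = (lcoef F m 1 s * deriv (deriv (lcoef F m 1)) s - (deriv (lcoef F m 1) s)\<^sup>2) / (lcoef F m 1 s)\<^sup>2"
      by (rule dlog0[of "lcoef F m" s, OF nz])
    also have "\<dots> = (real m * f2 s * (real m * f4 s) - (real m * f3 s)\<^sup>2) / (real m * f2 s)\<^sup>2"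
      unfolding e1 e2 lc1'[OF m] ..
    also have "\<dots> = Dv s" using m pos[OF s]
      by (simp add: Dv_def field_simps power2_eq_square)
    finally show ?thesis .
  qed
  have Ln: "deriv (deriv (\<lambda>s. ln (lcoef F m 1 s))) t = Dv t" if m: "m \<ge> 1" and t: "t \<in> J" for m t
  proof -
    have c1: "(\<lambda>s. ln (lcoef F m 1 s)) = (\<lambda>s. ln (real m * f2 s))" using lc1' m by auto
    have "deriv (deriv (\<lambda>s. ln (real m * f2 s))) t = deriv (\<lambda>u. f3 u / f2 u) t"
    proof (rule deriv_cong_J[OF J t])
      fix u assume u: "u \<in> J"
      have "DERIV f2 u :> f3 u" unfolding f3_def
        using smooth_diff[OF sm2 u] DERIV_deriv_iff_field_differentiable by blast
      then have "DERIV (\<lambda>s. real m * f2 s) u :> real m * f3 u" by (rule DERIV_cmult)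
      moreover have "DERIV ln (real m * f2 u) :> 1 / (real m * f2 u)"
        using m pos[OF u] by (intro DERIV_ln_divide) simp
      ultimately have "DERIV (\<lambda>s. ln (real m * f2 s)) u :> 1 / (real m * f2 u) * (real m * f3 u)"
        by (rule DERIV_chain2[rotated])
      then show "deriv (\<lambda>s. ln (real m * f2 s)) u = f3 u / f2 u"
        using m by (auto dest!: DERIV_imp_deriv)
    qed
    also have "\<dots> = Dv t"
      using smooth_diff[OF sm3 t] smooth_diff[OF sm2 t] pos[OF t]
      by (simp add: Dv_def f4_def[symmetric] f3_def[symmetric] power2_eq_square algebra_simps)
    finally show ?thesis using c1 by simp
  qed
  have K: "dlog_ser (lcoef F m) t $ q = deriv (deriv (mcoef F m q)) t"
    if m: "m \<ge> 1" and t: "t \<in> J" and q: "q \<ge> 1" for m t q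
  proof -
    have "mcoef F m q = (\<lambda>s. (fps_ln 1 oo Abs_fps (\<lambda>k. if k = 0 then 0 else lcoef F m (Suc k) s / lcoef F m 1 s)) $ q)"
      by (rule ext) (simp add: mcoef_def)
    moreover have "dlog_ser (lcoef F m) t $ q = deriv (deriv (\<lambda>s. (fps_ln 1 oo Abs_fps (\<lambda>k. if k = 0 then 0 else lcoef F m (Suc k) s / lcoef F m 1 s)) $ q)) t"
      by (rule key[OF J lcs _ t q]) (use lc1' m pos in force)
    ultimately show ?thesis by simp
  qed
  have L2: "lcoef F m 2 s = real m * (real m - 1) / 2 * Dv s" if m: "m \<ge> 1" and s: "s \<in> J" for m s
  proof -
    have "lcoef F m 2 s = (\<Sum>j\<in>{1..<m}. real j * dlog_ser (lcoef F (m - j)) s $ (2 - 2))"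
      by (rule lcp) (use m in auto)
    also have "\<dots> = (\<Sum>j\<in>{1..<m}. real j * Dv s)"
    proof (rule sum.cong[OF refl])
      fix j assume "j \<in> {1..<m}" then have "m - j \<ge> 1" by auto
      then show "real j * dlog_ser (lcoef F (m - j)) s $ (2 - 2) = real j * Dv s" using B[OF _ s] by simp
    qed
    also have "\<dots> = (\<Sum>j\<in>{1..<m}. real j) * Dv s" by (rule sum_distrib_right[symmetric])
    also have "\<dots> = real m * (real m - 1) / 2 * Dv s" unfolding sum_j by simp
    finally show ?thesis .
  qed
  have M1: "mcoef F m 1 s = (real m - 1) / 2 * E s" if m: "m \<ge> 1" and s: "s \<in> J" for m s
  proof -
    have "mcoef F m 1 s = lcoef F m 2 s / lcoef F m 1 s"
      by (simp add: mcoef_def fps_compose_nth fps_ln_nth numeral_2_eq_2)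
    also have "\<dots> = (real m - 1) / 2 * E s"
      using L2[OF m s] lc1'[OF m] pos[OF s] m
      by (simp add: Dv_def E_def field_simps power2_eq_square power3_eq_cube)
    finally show ?thesis .
  qed
  show ?thesis unfolding d2 d3 d4
  proof (intro allI impI ballI conjI)
    fix n :: nat and t assume n: "n \<ge> 1" and t: "t \<in> J"
    show "lcoef F n 1 t = real n * f2 t" by (rule lc1'[OF n])
    have "lcoef F n 2 t = (\<Sum>j\<in>{1..<n}. real j * dlog_ser (lcoef F (n - j)) t $ (2 - 2))"
      by (rule lcp) (use n in auto)
    also have "\<dots> = (\<Sum>j\<in>{1..<n}. real j * deriv (deriv (\<lambda>s. ln (lcoef F (n - j) 1 s))) t)"
    proof (rule sum.cong[OF refl])
      fix j assume "j \<in> {1..<n}" then have j: "n - j \<ge> 1" by auto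
      show "real j * dlog_ser (lcoef F (n - j)) t $ (2 - 2) = real j * deriv (deriv (\<lambda>s. ln (lcoef F (n - j) 1 s))) t"
        using B[OF j t] Ln[OF j t] by simp
    qed
    finally show "lcoef F n 2 t = (\<Sum>j\<in>{1..<n}. real j * deriv (deriv (\<lambda>s. ln (lcoef F (n - j) 1 s))) t)" .
    show "lcoef F n p t = (\<Sum>j\<in>{1..<n}. real j * deriv (deriv (mcoef F (n - j) (p - 2))) t)"
      if p: "p \<ge> 3" for p
    proof -
      have "lcoef F n p t = (\<Sum>j\<in>{1..<n}. real j * dlog_ser (lcoef F (n - j)) t $ (p - 2))"
        by (rule lcp) (use n p in auto)
      also have "\<dots> = (\<Sum>j\<in>{1..<n}. real j * deriv (deriv (mcoef F (n - j) (p - 2))) t)"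
      proof (rule sum.cong[OF refl])
        fix j assume "j \<in> {1..<n}" then have j: "n - j \<ge> 1" by auto
        have "p - 2 \<ge> 1" using p by auto
        then show "real j * dlog_ser (lcoef F (n - j)) t $ (p - 2) = real j * deriv (deriv (mcoef F (n - j) (p - 2))) t"
          using K[OF j t] by simp
      qed
      finally show ?thesis .
    qed
    show "lcoef F n 2 t = 1/2 * real n * (real n - 1) * ((f2 t * f4 t - (f3 t)\<^sup>2) / (f2 t)\<^sup>2)"
      using L2[OF n t] by (simp add: Dv_def)
    have "lcoef F n 3 t = (\<Sum>j\<in>{1..<n}. real j * dlog_ser (lcoef F (n - j)) t $ (3 - 2))"
      by (rule lcp) (use n in auto)
    also have "\<dots> = (\<Sum>j\<in>{1..<n}. real j * deriv (deriv (mcoef F (n - j) 1)) t)"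
    proof (rule sum.cong[OF refl])
      fix j assume "j \<in> {1..<n}" then have j: "n - j \<ge> 1" by auto
      show "real j * dlog_ser (lcoef F (n - j)) t $ (3 - 2) = real j * deriv (deriv (mcoef F (n - j) 1)) t"
        using K[OF j t, of 1] by simp
    qed
    also have "\<dots> = (\<Sum>j\<in>{1..<n}. real j * ((real (n - j) - 1) / 2 * deriv (deriv E) t))"
    proof (rule sum.cong[OF refl])
      fix j assume j: "j \<in> {1..<n}"
      have "deriv (deriv (mcoef F (n - j) 1)) t = deriv (deriv (\<lambda>s. (real (n - j) - 1) / 2 * E s)) t"
        by (rule deriv2_cong[OF J t]) (use M1 j in auto)
      also have "\<dots> = (real (n - j) - 1) / 2 * deriv (deriv E) t"
        by (rule deriv2_cmult[OF J t smE])
      finally show "real j * deriv (deriv (mcoef F (n - j) 1)) t = real j * ((real (n - j) - 1) / 2 * deriv (deriv E) t)"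
        by simp
    qed
    also have "\<dots> = (\<Sum>j\<in>{1..<n}. real j * (real (n - j) - 1) * (deriv (deriv E) t / 2))"
      by (rule sum.cong[OF refl]) (rule alg2)
    also have "\<dots> = (\<Sum>j\<in>{1..<n}. real j * (real (n - j) - 1)) * (deriv (deriv E) t / 2)"
      by (rule sum_distrib_right[symmetric])
    also have "\<dots> = 1/12 * real n * (real n - 1) * (real n - 2) * deriv (deriv E) t"
      unfolding sum_j3 by simp
    finally show "lcoef F n 3 t = 1/12 * real n * (real n - 1) * (real n - 2) *
         deriv (deriv (\<lambda>s. (f2 s * f4 s - (f3 s)\<^sup>2) / (f2 s) ^ 3)) t"
      by (simp add: E_def)
  qed
qed

end
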